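(* Let $\mathbf{V}\in\mathbb{R}^{n\times k}$ have orthonormal columns. Suppose $\mathbf{W}\in\mathbb{R}^{k\times k}$ satisfies $$\max_{i\in[n]}\Big\{\min_{l\in[k]}\|\mathbf{V}_{i,:}-\mathbf{W}_{l,:}\|\Big\}=\epsilon.$$ Then, provided $\epsilon<(3nk^2)^{-1}$, $$\min_{i,j\in[k],\,i\neq j}\|\mathbf{W}_{i,:}-\mathbf{W}_{j,:}\|\ge\sqrt{\frac{2}{n}}-\sqrt{12}\,k\,(3n\epsilon)^{1/4}.$$
   Context: $[n]=\{1,\dots,n\}$; $\|\cdot\|$ is the Euclidean norm; $\mathbf{V}_{i,:}$ denotes the $i$-th row of $\mathbf{V}$. *)

theory Defs
  imports "HOL-Analysis.Analysis"
begin

end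

theory Submission
  imports Defs
begin

lemma real_final:
  fixes n k e d :: real
  assumes n: "n \<ge> 1" and k: "k \<ge> 1" and e0: "e \<ge> 0" and e1: "e < 1"
    and d: "d \<ge> 2 / sqrt n - 2 * e"
  shows "d \<ge> sqrt (2 / n) - sqrt 12 * k * (3 * n * e) powr (1/4)"
proof -
  have s1: "sqrt (2 / n) \<le> 2 / sqrt n"
  proof -
    have "sqrt (2 / n) = sqrt 2 / sqrt n" by (simp add: real_sqrt_divide)
    moreover have "sqrt 2 \<le> 2" by (rule real_le_lsqrt) auto
    ultimately show ?thesis using n by (simp add: divide_right_mono)
  qed
  have s2: "2 * e \<le> sqrt 12 * k * (3 * n * e) powr (1/4)"
  proof (cases "e = 0")
    case True then show ?thesis by simp
  next
    case False
    hence ep: "e > 0" using e0 by simp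
    have "e = e powr 1" using ep by simp
    also have "\<dots> \<le> e powr (1/4)" using ep e1 by (intro powr_mono') auto
    also have "\<dots> \<le> (3 * n * e) powr (1/4)"
      using ep n by (intro powr_mono2) auto
    finally have a: "e \<le> (3 * n * e) powr (1/4)" .
    have "2 \<le> sqrt 12" by (rule real_le_rsqrt) simp
    moreover have "sqrt 12 \<le> sqrt 12 * k" using k by simp
    ultimately have b: "2 \<le> sqrt 12 * k" by linarith
    have "2 * e \<le> (sqrt 12 * k) * (3 * n * e) powr (1/4)"
      using a e0 b by (intro mult_mono) auto
    then show ?thesis by simp
  qed
  show ?thesis using s1 s2 d by linarith
qed

theorem proposition5:
  fixes V :: "real ^ 'k ^ 'n" and W :: "real ^ 'k ^ 'k" and \<epsilon> :: real
  assumes orth: "transpose V ** V = mat 1"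
    and eps: "Max (range (\<lambda>i. Min (range (\<lambda>l. norm (V $ i - W $ l))))) = \<epsilon>"
    and small: "\<epsilon> < 1 / (3 * real CARD('n) * real CARD('k) ^ 2)"
  shows "\<forall>i j. i \<noteq> j \<longrightarrow>
           norm (W $ i - W $ j) \<ge> sqrt (2 / real CARD('n))
             - sqrt 12 * real CARD('k) * (3 * real CARD('n) * \<epsilon>) powr (1/4)"
proof (intro allI impI)
  fix l m :: 'k
  assume lm: "l \<noteq> m"
  define d where "d = norm (W $ l - W $ m)"
  have near: "\<exists>c. norm (V $ i - W $ c) \<le> \<epsilon>" for i
  proof -
    have "Min (range (\<lambda>l. norm (V $ i - W $ l))) \<in> range (\<lambda>l. norm (V $ i - W $ l))"
      by (rule Min_in) auto
    then obtain c where c: "Min (range (\<lambda>l. norm (V $ i - W $ l))) = norm (V $ i - W $ c)" by blast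
    have "Min (range (\<lambda>l. norm (V $ i - W $ l))) \<le> \<epsilon>"
      unfolding eps[symmetric] by (rule Max_ge) auto
    with c show ?thesis by auto
  qed
  have e0: "\<epsilon> \<ge> 0"
    using near[of undefined] by (meson norm_ge_zero order_trans)
  define f where "f j = (if j = l \<or> j = m then W $ l + W $ m else W $ j)" for j
  have rng: "range f = f ` (UNIV - {m})"
  proof
    show "range f \<subseteq> f ` (UNIV - {m})"
    proof
      fix y assume "y \<in> range f"
      then obtain j where j: "y = f j" by blast
      show "y \<in> f ` (UNIV - {m})"
      proof (cases "j = m")
        case True
        then have "y = f l" using j lm by (simp add: f_def)
        then show ?thesis using lm by blast
      next
        case False then show ?thesis using j by blast
      qed
    qed
  qed auto
  have "card (range f) \<le> card (UNIV - {m} :: 'k set)"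
    unfolding rng by (rule card_image_le) simp
  also have "\<dots> < CARD('k)" by (simp add: card_Diff_singleton)
  finally have dimf: "dim (range f) < DIM(real ^ 'k)"
    using dim_le_card'[of "range f"] by simp
  then obtain x0 :: "real ^ 'k" where x0: "x0 \<noteq> 0" "\<And>y. y \<in> span (range f) \<Longrightarrow> orthogonal x0 y"
    using orthogonal_to_subspace_exists[OF dimf] by blast
  define x where "x = x0 /\<^sub>R norm x0"
  have nx: "norm x = 1" using x0 by (simp add: x_def)
  have ox: "inner x (f j) = 0" for j
    using x0(2)[of "f j"] by (simp add: x_def orthogonal_def span_base)
  have Wc: "\<bar>inner (W $ c) x\<bar> \<le> d / 2" for c
  proof -
    have lmx: "inner (W $ l) x + inner (W $ m) x = 0"
    proof -
      have "inner x (W $ l) + inner x (W $ m) = 0"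
        using ox[of l] by (simp add: f_def inner_add_right)
      then show ?thesis by (simp add: inner_commute)
    qed
    have dl: "\<bar>inner (W $ l - W $ m) x\<bar> \<le> d"
      using Cauchy_Schwarz_ineq2[of "W $ l - W $ m" x] nx by (simp add: d_def)
    show ?thesis
    proof (cases "c = l \<or> c = m")
      case True
      then show ?thesis using lmx dl by (auto simp: inner_diff_left)
    next
      case False
      then show ?thesis using ox[of c] d_def by (simp add: f_def inner_commute)
    qed
  qed
  have Vi: "\<bar>inner (V $ i) x\<bar> \<le> d / 2 + \<epsilon>" for i
  proof -
    obtain c where c: "norm (V $ i - W $ c) \<le> \<epsilon>" using near by blast
    have "\<bar>inner (V $ i - W $ c) x\<bar> \<le> \<epsilon>"
      using Cauchy_Schwarz_ineq2[of "V $ i - W $ c" x] nx c by simp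
    moreover have "inner (V $ i) x = inner (W $ c) x + inner (V $ i - W $ c) x"
      by (simp add: inner_diff_left)
    ultimately show ?thesis using Wc[of c] by linarith
  qed
  have one: "(\<Sum>i\<in>UNIV. (inner (V $ i) x)^2) = 1"
  proof -
    have "inner (V *v x) (V *v x) = inner (x v* transpose V) (V *v x)"
      using transpose_matrix_vector[of "transpose V" x] by simp
    also have "\<dots> = inner x (transpose V *v (V *v x))"
      by (rule dot_lmul_matrix)
    also have "\<dots> = inner x ((transpose V ** V) *v x)"
      by (simp only: matrix_vector_mul_assoc)
    also have "\<dots> = 1" using orth nx by (simp add: dot_square_norm)
    finally have "inner (V *v x) (V *v x) = 1" .
    then show ?thesis
      by (simp add: inner_vec_def matrix_vector_mul_component power2_eq_square)
  qed
  have "1 \<le> (\<Sum>i\<in>(UNIV::'n set). (d / 2 + \<epsilon>)^2)"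
    unfolding one[symmetric]
  proof (rule sum_mono)
    fix i
    show "(inner (V $ i) x)^2 \<le> (d / 2 + \<epsilon>)^2"
    proof -
      have "\<bar>inner (V $ i) x\<bar>^2 \<le> (d / 2 + \<epsilon>)^2"
        using Vi[of i] by (intro power_mono) auto
      then show ?thesis by simp
    qed
  qed
  hence "1 \<le> real CARD('n) * (d / 2 + \<epsilon>)^2" by simp
  hence "1 / real CARD('n) \<le> (d / 2 + \<epsilon>)^2"
    by (simp add: divide_le_eq mult.commute)
  hence "sqrt (1 / real CARD('n)) \<le> sqrt ((d / 2 + \<epsilon>)^2)"
    by (rule real_sqrt_le_mono)
  moreover have "d / 2 + \<epsilon> \<ge> 0" using e0 d_def by simp
  ultimately have "1 / sqrt (real CARD('n)) \<le> d / 2 + \<epsilon>"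
    by (simp add: real_sqrt_divide)
  hence dd: "d \<ge> 2 / sqrt (real CARD('n)) - 2 * \<epsilon>" by simp
  have e1: "\<epsilon> < 1"
  proof -
    have n1: "1 \<le> real CARD('n)" by (simp add: Suc_leI)
    have k1: "1 \<le> real CARD('k) ^ 2" by (simp add: Suc_leI)
    have "1 \<le> 3 * real CARD('n)" using n1 by linarith
    hence "1 \<le> 3 * real CARD('n) * real CARD('k) ^ 2" using k1
      by (metis mult_ge1_I order.trans)
    hence "1 / (3 * real CARD('n) * real CARD('k) ^ 2) \<le> 1" by simp
    then show ?thesis using small by linarith
  qed
  show "norm (W $ l - W $ m) \<ge> sqrt (2 / real CARD('n))
             - sqrt 12 * real CARD('k) * (3 * real CARD('n) * \<epsilon>) powr (1/4)"
    unfolding d_def[symmetric]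
    by (rule real_final[OF _ _ e0 e1 dd]) (simp_all add: Suc_leI)
qed

end
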